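(* Let $n\geq0$ be an integer. Then $\dim_{\mathbb C}\big(\mathscr M_n(x_1)\cap\mathscr M_n(x_2)\cap\mathscr M_n(x_3)\big)=0$ if $n<t_1+t_2+t_3$, and equals $2(n-t_1-t_2-t_3+1)$ if $n\geq t_1+t_2+t_3$.
   Context: Fix real numbers $k_1,k_2,k_3$. For $i=1,2,3$ let $R_i$ be the operator on functions on $\mathbb R^3$ replacing $x_i$ by $-x_i$, and $T_if=\frac{\partial f}{\partial x_i}+k_i\frac{f-R_if}{x_i}$ (Dunkl operators). Let $\sigma_1=\begin{pmatrix}0&1\\1&0\end{pmatrix}$, $\sigma_2=\begin{pmatrix}0&-\sqrt{-1}\\ \sqrt{-1}&0\end{pmatrix}$, $\sigma_3=\begin{pmatrix}1&0\\0&-1\end{pmatrix}$, and let $e_i$ act on $\mathbb C^2$ by $\sigma_i$. Tensor products are over $\mathbb R$; $\mathbb R[\cdots]_m$ denotes homogeneous polynomials of degree $m$. Let $\mathbf D=e_1\otimes T_1+e_2\otimes T_2+e_3\otimes T_3$ and $\mathscr M_n=\ker(\mathbf D|_{\mathbb C^2\otimes\mathbb R[x_1,x_2,x_3]_n})$. For $i=1,2,3$ set $t_i=-2k_i$ if $2k_i$ is an odd negative integer, and $t_i=\infty$ otherwise (with the usual conventions for sums and comparisons with $\infty$). For $i=1,2,3$, $\mathscr M_n(x_i)=\mathscr M_n\cap\bigoplus_{j=t_i}^n\mathbb C^2\otimes(x_i^j\cdot\mathbb R[x_p,x_q]_{n-j})$ where $\{p,q\}=\{1,2,3\}\setminus\{i\}$,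 interpreted as $\{0\}$ if $n<t_i$. *)

theory Defs
  imports "HOL-Analysis.Analysis" "HOL-Library.Function_Algebras" "HOL-Library.Extended_Nat"
begin

text \<open>Polynomials in x1,x2,x3 with coefficients in C^2 (= C^2 tensor_R R[x1,x2,x3]) are
  represented by their coefficient functions: p alpha is the C^2-coefficient of the
  monomial x1^(alpha$1) x2^(alpha$2) x3^(alpha$3). Index i::3 corresponds to x_i.\<close>

type_synonym expo = "nat ^ 3"
type_synonym cpoly = "expo \<Rightarrow> complex ^ 2"

definition cscale :: "complex \<Rightarrow> cpoly \<Rightarrow> cpoly" where
  "cscale c p = (\<lambda>\<alpha>. c *s p \<alpha>)"

definition hom :: "nat \<Rightarrow> cpoly set" where
  "hom n = {p. \<forall>\<alpha>. p \<alpha> \<noteq> 0 \<longrightarrow> (\<Sum>j\<in>UNIV. \<alpha> $ j) = n}"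

definition pderiv_i :: "3 \<Rightarrow> cpoly \<Rightarrow> cpoly" where
  "pderiv_i i p = (\<lambda>\<alpha>. of_nat (\<alpha> $ i + 1) *s p (\<alpha> + axis i 1))"

definition refl_i :: "3 \<Rightarrow> cpoly \<Rightarrow> cpoly" where
  "refl_i i p = (\<lambda>\<alpha>. ((-1) ^ (\<alpha> $ i)) *s p \<alpha>)"

text \<open>Division by x_i (exact for polynomials divisible by x_i, such as f - R_i f).\<close>
definition divx_i :: "3 \<Rightarrow> cpoly \<Rightarrow> cpoly" where
  "divx_i i q = (\<lambda>\<alpha>. q (\<alpha> + axis i 1))"

definition dunkl :: "real ^ 3 \<Rightarrow> 3 \<Rightarrow> cpoly \<Rightarrow> cpoly" where
  "dunkl k i f = pderiv_i i f + cscale (complex_of_real (k $ i)) (divx_i i (f - refl_i i f))"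

definition sigma1 :: "complex ^ 2 ^ 2" where
  "sigma1 = (\<chi> r c. if r = c then 0 else 1)"
definition sigma2 :: "complex ^ 2 ^ 2" where
  "sigma2 = (\<chi> r c. if r = c then 0 else if r = 1 then - \<i> else \<i>)"
definition sigma3 :: "complex ^ 2 ^ 2" where
  "sigma3 = (\<chi> r c. if r \<noteq> c then 0 else if r = 1 then 1 else -1)"

definition sigma :: "3 \<Rightarrow> complex ^ 2 ^ 2" where
  "sigma i = (if i = 1 then sigma1 else if i = 2 then sigma2 else sigma3)"

definition dirac :: "real ^ 3 \<Rightarrow> cpoly \<Rightarrow> cpoly" where
  "dirac k f = (\<lambda>\<alpha>. \<Sum>i\<in>UNIV. sigma i *v dunkl k i f \<alpha>)"

definition Mker :: "real ^ 3 \<Rightarrow> nat \<Rightarrow> cpoly set" where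
  "Mker k n = {p \<in> hom n. dirac k p = 0}"

definition tpar :: "real ^ 3 \<Rightarrow> 3 \<Rightarrow> enat" where
  "tpar k i = (if \<exists>m::nat. odd m \<and> 2 * k $ i = - real m
               then enat (nat \<lfloor>- 2 * k $ i\<rfloor>) else \<infinity>)"

text \<open>M_n(x_i): elements of M_n lying in the sum over j = t_i..n of
  C^2 tensor x_i^j R[x_p,x_q]_(n-j), i.e. all monomials have x_i-degree at least t_i.\<close>
definition Mx :: "real ^ 3 \<Rightarrow> nat \<Rightarrow> 3 \<Rightarrow> cpoly set" where
  "Mx k n i = {p \<in> Mker k n. \<forall>\<alpha>. p \<alpha> \<noteq> 0 \<longrightarrow> tpar k i \<le> enat (\<alpha> $ i)}"

definition cdim :: "cpoly set \<Rightarrow> nat" where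
  "cdim S = vector_space.dim cscale S"

end

theory Submission
  imports Defs
begin


lemma cscale_vs: "vector_space cscale"
  by unfold_locales (auto simp: cscale_def fun_eq_iff vector_add_ldistrib vector_sadd_rdistrib vector_smult_assoc)

global_interpretation cs: vector_space cscale by (rule cscale_vs)

lemma sum_fun_apply: "(sum f A) x = sum (\<lambda>a. f a x) A"
  by (induction A rule: infinite_finite_induct) auto

lemma cscale_apply[simp]: "cscale c p a = c *s p a" by (simp add: cscale_def)

lemma dim_iso:
  assumes sub: "cs.subspace V" and mh: "module_hom cscale cscale r" and inj: "inj_on r V"
    and img: "r ` V = W"
  shows "cs.dim V = cs.dim W"
proof -
  obtain B where B: "B \<subseteq> V" "cs.independent B" "V \<subseteq> cs.span B" "card B = cs.dim V"
    using cs.basis_exists by blast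
  have spB: "cs.span B = V" using cs.span_subspace[OF B(1) B(3) sub] .
  have ind: "cs.independent (r ` B)"
    using module_hom.independent_injective_image[OF mh B(2)] inj spB by simp
  have sp: "cs.span (r ` B) = W"
    using module_hom.span_image[OF mh, of B] spB img by simp
  have "card (r ` B) = card B" using inj B(1) by (meson card_image inj_on_subset)
  then show ?thesis
    using cs.dim_unique[of "r ` B" W "cs.dim V"] ind sp B(4) cs.span_superset[of "r ` B"]
    by auto
qed



definition delta :: "expo \<Rightarrow> 2 \<Rightarrow> cpoly" where
  "delta a r = (\<lambda>b. if b = a then axis r 1 else 0)"

definition suppset :: "expo set \<Rightarrow> cpoly set" where
  "suppset S = {q. \<forall>a. q a \<noteq> 0 \<longrightarrow> a \<in> S}"

lemma delta_inj: "inj (\<lambda>(a,r). delta a r)"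
proof (rule injI, clarsimp)
  fix a r b s assume "delta a r = delta b s"
  then have "delta a r a $ r = delta b s a $ r" by simp
  then have ab: "a = b" by (auto simp: delta_def axis_def split: if_splits)
  with \<open>delta a r = delta b s\<close> have "delta a r a $ s = delta b s a $ s" by simp
  then show "a = b \<and> r = s" using ab by (auto simp: delta_def axis_def split: if_splits)
qed

lemma dim_suppset:
  assumes fin: "finite S"
  shows "cs.dim (suppset S) = 2 * card S"
proof -
  let ?D = "(\<lambda>(a,r). delta a r)"
  let ?B = "?D ` (S \<times> (UNIV::2 set))"
  have injD: "inj_on ?D (S \<times> UNIV)" using delta_inj by (rule inj_on_subset) simp
  have finB: "finite ?B" using fin by simp
  have cardB: "card ?B = 2 * card S"
    using card_image[OF injD] fin by (simp add: card_cartesian_product)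
  have sub: "?B \<subseteq> suppset S" by (auto simp: suppset_def delta_def split: if_splits)
  have ind: "cs.independent ?B"
  proof (rule cs.independent_if_scalars_zero[OF finB])
    fix f x assume sum0: "(\<Sum>x\<in>?B. cscale (f x) x) = 0" and x: "x \<in> ?B"
    then obtain a r where ar: "a \<in> S" "x = delta a r" by auto
    have "(\<Sum>x\<in>?B. cscale (f x) x) = (\<Sum>p\<in>S \<times> UNIV. cscale (f (?D p)) (?D p))"
      using sum.reindex[OF injD] by simp
    then have "0 = (\<Sum>p\<in>S \<times> UNIV. cscale (f (?D p)) (?D p)) a $ r" using sum0 by simp
    also have "\<dots> = (\<Sum>p\<in>S \<times> UNIV. f (?D p) * (?D p a $ r))"
      by (simp add: sum_fun_apply)
    also have "\<dots> = (\<Sum>p\<in>{(a,r)}. f (?D p) * (?D p a $ r))"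
      using ar(1) fin by (intro sum.mono_neutral_right) (auto simp: delta_def axis_def split: if_splits)
    also have "\<dots> = f x" using ar by (simp add: delta_def axis_def)
    finally show "f x = 0" by simp
  qed
  have spn: "suppset S \<subseteq> cs.span ?B"
  proof
    fix q assume q: "q \<in> suppset S"
    have "q = (\<Sum>p\<in>S \<times> UNIV. cscale (q (fst p) $ snd p) (?D p))"
    proof (rule ext, rule vec_eq_iff[THEN iffD2], rule allI)
      fix b s
      show "q b $ s = (\<Sum>p\<in>S \<times> UNIV. cscale (q (fst p) $ snd p) (?D p)) b $ s"
      proof (cases "b \<in> S")
        case True
        have "(\<Sum>p\<in>S \<times> UNIV. cscale (q (fst p) $ snd p) (?D p)) b $ s
            = (\<Sum>p\<in>S \<times> UNIV. q (fst p) $ snd p * (?D p b $ s))"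
          by (simp add: sum_fun_apply)
        also have "\<dots> = (\<Sum>p\<in>{(b,s)}. q (fst p) $ snd p * (?D p b $ s))"
          using True fin by (intro sum.mono_neutral_right) (auto simp: delta_def axis_def split: if_splits)
        also have "\<dots> = q b $ s" by (simp add: delta_def axis_def)
        finally show ?thesis by simp
      next
        case False
        then have "q b = 0" using q by (auto simp: suppset_def)
        moreover have "(\<Sum>p\<in>S \<times> UNIV. q (fst p) $ snd p * (?D p b $ s)) = 0"
          using False by (intro sum.neutral) (auto simp: delta_def)
        ultimately show ?thesis by (simp add: sum_fun_apply)
      qed
    qed
    also have "\<dots> \<in> cs.span ?B"
      by (intro cs.span_sum cs.span_scale cs.span_base) auto
    finally show "q \<in> cs.span ?B" .
  qed
  show ?thesis using cs.dim_unique[OF sub spn ind cardB] .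
qed



definition cc :: "real ^ 3 \<Rightarrow> 3 \<Rightarrow> nat \<Rightarrow> complex" where
  "cc k i a = complex_of_real (real a + k $ i * (1 - (-1) ^ a))"

abbreviation e :: "3 \<Rightarrow> expo" where "e i \<equiv> axis i 1"

lemma dunkl_coeff: "dunkl k i f a = cc k i (a $ i + 1) *s f (a + e i)"
proof -
  have "(a + e i) $ i = a $ i + 1" by simp
  then show ?thesis
    by (simp add: dunkl_def pderiv_i_def divx_i_def refl_i_def cscale_def cc_def
        vec_eq_iff algebra_simps)
qed

lemma sigma_rows:
  "(sigma1 *v v) $ 1 = v $ 2" "(sigma1 *v v) $ 2 = v $ 1"
  "(sigma2 *v v) $ 1 = - \<i> * v $ 2" "(sigma2 *v v) $ 2 = \<i> * v $ 1"
  "(sigma3 *v v) $ 1 = v $ 1" "(sigma3 *v v) $ 2 = - v $ 2"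
  by (simp_all add: sigma1_def sigma2_def sigma3_def matrix_vector_mult_def sum_2)

lemma dirac_comp:
  "dirac k f a $ 1 = cc k 1 (a$1+1) * f (a + e 1) $ 2 - \<i> * cc k 2 (a$2+1) * f (a + e 2) $ 2
      + cc k 3 (a$3+1) * f (a + e 3) $ 1"
  "dirac k f a $ 2 = cc k 1 (a$1+1) * f (a + e 1) $ 1 + \<i> * cc k 2 (a$2+1) * f (a + e 2) $ 1
      - cc k 3 (a$3+1) * f (a + e 3) $ 2"
  by (simp_all add: dirac_def sum_3 sigma_def dunkl_coeff sigma_rows algebra_simps)



lemma dirac_add: "dirac k (p + q) = dirac k p + dirac k q"
  by (simp add: fun_eq_iff vec_eq_iff forall_2 dirac_comp algebra_simps)

lemma dirac_scale: "dirac k (cscale c p) = cscale c (dirac k p)"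
  by (simp add: fun_eq_iff vec_eq_iff forall_2 dirac_comp algebra_simps)

lemma dirac_zero: "dirac k 0 = 0"
  by (simp add: fun_eq_iff vec_eq_iff forall_2 dirac_comp)

lemma e_comp[simp]: "e i $ j = (if j = i then 1 else 0)"
  by (simp add: axis_def)


locale tset =
  fixes k :: "real ^ 3" and t :: "3 \<Rightarrow> nat"
  assumes todd: "\<And>i. odd (t i)" and kt: "\<And>i. k $ i = - real (t i) / 2"
begin

lemma cc_zero: "1 \<le> a \<Longrightarrow> cc k i a = 0 \<longleftrightarrow> a = t i"
proof (cases "even a")
  case True
  assume "1 \<le> a"
  then have "cc k i a \<noteq> 0" using True by (simp add: cc_def)
  moreover have "a \<noteq> t i" using True todd[of i] by auto
  ultimately show ?thesis by simp
next
  case False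
  then have "cc k i a = complex_of_real (real a - real (t i))" by (simp add: cc_def kt)
  then show ?thesis by simp
qed

lemma tpar_eq: "tpar k i = enat (t i)"
proof -
  have "odd (t i) \<and> 2 * k $ i = - real (t i)" using todd kt by simp
  then have "\<exists>m::nat. odd m \<and> 2 * k $ i = - real m" by blast
  moreover have "nat \<lfloor>- 2 * k $ i\<rfloor> = t i" using kt[of i] by simp
  ultimately show ?thesis by (simp add: tpar_def)
qed

definition VV :: "nat \<Rightarrow> cpoly set" where
  "VV n = {p \<in> hom n. dirac k p = 0 \<and> (\<forall>a. p a \<noteq> 0 \<longrightarrow> (\<forall>i. t i \<le> a $ i))}"

lemma Mx_eq: "Mx k n 1 \<inter> Mx k n 2 \<inter> Mx k n 3 = VV n"
  by (auto simp: Mx_def Mker_def VV_def tpar_eq forall_3)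

lemma VV_sub: "cs.subspace (VV n)"
  unfolding cs.subspace_def
proof (intro conjI ballI allI)
  show "0 \<in> VV n" by (simp add: VV_def hom_def dirac_zero)
next
  fix x y assume x: "x \<in> VV n" and y: "y \<in> VV n"
  have nz: "(x + y) a \<noteq> 0 \<Longrightarrow> x a \<noteq> 0 \<or> y a \<noteq> 0" for a by auto
  show "x + y \<in> VV n" using x y nz unfolding VV_def hom_def
    by (simp add: dirac_add) metis
next
  fix c x assume x: "x \<in> VV n"
  show "cscale c x \<in> VV n" using x unfolding VV_def hom_def
    by (simp add: dirac_scale)
qed

lemma VV_supp: "p \<in> VV n \<Longrightarrow> p a \<noteq> 0 \<Longrightarrow> t i \<le> a $ i"
  unfolding VV_def by blast

lemma VV_low: "p \<in> VV n \<Longrightarrow> a $ 3 < t 3 \<Longrightarrow> p a = 0"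
  using VV_supp[of p n a 3] by linarith

lemma VV_zero:
  assumes p: "p \<in> VV n" and z: "\<And>a. a $ 3 = t 3 \<Longrightarrow> p a = 0"
  shows "p = 0"
proof -
  have D: "dirac k p = 0" using p by (simp add: VV_def)
  have "\<forall>a. a $ 3 = t 3 + j \<longrightarrow> p a = 0" for j
  proof (induction j)
    case 0 then show ?case using z by simp
  next
    case (Suc j)
    show ?case
    proof (intro allI impI)
      fix a :: expo assume a3: "a $ 3 = t 3 + Suc j"
      define b where "b = a - e 3"
      have ab: "a = b + e 3" using a3 unfolding b_def by (auto simp: vec_eq_iff axis_def)
      have b3: "b $ 3 = t 3 + j" using a3 by (simp add: b_def)
      have p1: "p (b + e 1) = 0" and p2: "p (b + e 2) = 0" using Suc b3 by (simp_all add: axis_def)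
      have c3: "cc k 3 (b$3+1) \<noteq> 0" using cc_zero[of "b$3+1" 3] b3 by simp
      have "dirac k p b $ 1 = 0" "dirac k p b $ 2 = 0" using D by simp_all
      then have "cc k 3 (b$3+1) * p (b + e 3) $ 1 = 0" "cc k 3 (b$3+1) * p (b + e 3) $ 2 = 0"
        unfolding dirac_comp p1 p2 by simp_all
      then have "p (b + e 3) = 0" using c3 by (simp add: vec_eq_iff forall_2)
      then show "p a = 0" using ab by simp
    qed
  qed
  note all = this
  have "p a = 0" for a
  proof (cases "a $ 3 < t 3")
    case True then show ?thesis using VV_low[OF p] by simp
  next
    case False
    then have "a $ 3 = t 3 + (a $ 3 - t 3)" by simp
    then show ?thesis using all by blast
  qed
  then show ?thesis by (simp add: fun_eq_iff)
qed

end


context tset begin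

definition S0 :: "nat \<Rightarrow> expo set" where
  "S0 n = {a. a $ 3 = t 3 \<and> t 1 \<le> a $ 1 \<and> t 2 \<le> a $ 2 \<and> a $ 1 + a $ 2 + a $ 3 = n}"

definition stepv :: "cpoly \<Rightarrow> expo \<Rightarrow> complex ^ 2" where
  "stepv g b = (\<chi> s. if s = 1
      then - (cc k 1 (b$1+1) * g (b + e 1) $ 2 - \<i> * cc k 2 (b$2+1) * g (b + e 2) $ 2) / cc k 3 (b$3+1)
      else (cc k 1 (b$1+1) * g (b + e 1) $ 1 + \<i> * cc k 2 (b$2+1) * g (b + e 2) $ 1) / cc k 3 (b$3+1))"

primrec G :: "cpoly \<Rightarrow> nat \<Rightarrow> cpoly" where
  "G q 0 = q"
| "G q (Suc j) = (\<lambda>a. if a $ 3 = t 3 + Suc j then stepv (G q j) (a - e 3) else 0)"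

definition P :: "cpoly \<Rightarrow> cpoly" where
  "P q = (\<lambda>a. G q (a $ 3 - t 3) a)"

lemma stepv_nz:
  assumes "stepv g b \<noteq> 0"
  shows "(g (b + e 1) \<noteq> 0 \<and> cc k 1 (b$1+1) \<noteq> 0) \<or> (g (b + e 2) \<noteq> 0 \<and> cc k 2 (b$2+1) \<noteq> 0)"
proof (rule ccontr)
  assume "\<not> ?thesis"
  then have "stepv g b = 0" by (auto simp: stepv_def vec_eq_iff)
  with assms show False by simp
qed

lemma G_supp:
  assumes q: "q \<in> suppset (S0 n)"
  shows "G q j a \<noteq> 0 \<Longrightarrow> a $ 3 = t 3 + j \<and> t 1 \<le> a $ 1 \<and> t 2 \<le> a $ 2 \<and> a $ 1 + a $ 2 + a $ 3 = n"
proof (induction j arbitrary: a)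
  case 0 then show ?case using q by (auto simp: suppset_def S0_def)
next
  case (Suc j)
  have a3: "a $ 3 = t 3 + Suc j" and nz: "stepv (G q j) (a - e 3) \<noteq> 0"
    using Suc.prems by (auto split: if_splits)
  define b where "b = a - e 3"
  have ab: "a = b + e 3" using a3 unfolding b_def by (auto simp: vec_eq_iff axis_def)
  have bc: "b $ 1 = a $ 1" "b $ 2 = a $ 2" "b $ 3 + 1 = a $ 3" using a3 by (simp_all add: b_def axis_def)
  from stepv_nz[OF nz[folded b_def]] show ?case
  proof
    assume h: "G q j (b + e 1) \<noteq> 0 \<and> cc k 1 (b$1+1) \<noteq> 0"
    then have IH: "(b + e 1) $ 3 = t 3 + j \<and> t 1 \<le> (b + e 1) $ 1 \<and> t 2 \<le> (b + e 1) $ 2 \<and>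
        (b + e 1) $ 1 + (b + e 1) $ 2 + (b + e 1) $ 3 = n" using Suc.IH by blast
    have "b $ 1 + 1 \<noteq> t 1" using h cc_zero[of "b$1+1" 1] by auto
    then show ?thesis using IH bc a3 by (simp add: axis_def)
  next
    assume h: "G q j (b + e 2) \<noteq> 0 \<and> cc k 2 (b$2+1) \<noteq> 0"
    then have IH: "(b + e 2) $ 3 = t 3 + j \<and> t 1 \<le> (b + e 2) $ 1 \<and> t 2 \<le> (b + e 2) $ 2 \<and>
        (b + e 2) $ 1 + (b + e 2) $ 2 + (b + e 2) $ 3 = n" using Suc.IH by blast
    have "b $ 2 + 1 \<noteq> t 2" using h cc_zero[of "b$2+1" 2] by auto
    then show ?thesis using IH bc a3 by (simp add: axis_def)
  qed
qed

lemma P_supp: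
  assumes q: "q \<in> suppset (S0 n)" and nz: "P q a \<noteq> 0"
  shows "t 3 \<le> a $ 3 \<and> t 1 \<le> a $ 1 \<and> t 2 \<le> a $ 2 \<and> a $ 1 + a $ 2 + a $ 3 = n"
  using G_supp[OF q, of "a $ 3 - t 3" a] nz unfolding P_def by auto

end


context tset begin

lemma P_low:
  assumes q: "q \<in> suppset (S0 n)" and "a $ 3 < t 3"
  shows "P q a = 0"
  using P_supp[OF q, of a] assms(2) by linarith

lemma P_dirac:
  assumes q: "q \<in> suppset (S0 n)"
  shows "dirac k (P q) = 0"
proof
  fix b :: expo
  have c1: "(b + e 1) $ 3 = b $ 3" "(b + e 2) $ 3 = b $ 3" "(b + e 3) $ 3 = b $ 3 + 1"
    by (simp_all add: axis_def)
  consider (i) "b $ 3 + 1 < t 3" | (ii) "b $ 3 + 1 = t 3" | (iii) "t 3 \<le> b $ 3" by linarith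
  then show "dirac k (P q) b = 0 b"
  proof cases
    case i
    then have "P q (b + e 1) = 0" "P q (b + e 2) = 0" "P q (b + e 3) = 0"
      using P_low[OF q] c1 by simp_all
    then show ?thesis by (simp add: vec_eq_iff forall_2 dirac_comp)
  next
    case ii
    then have "P q (b + e 1) = 0" "P q (b + e 2) = 0"
      using P_low[OF q] c1 by simp_all
    moreover have "cc k 3 (b $ 3 + 1) = 0" using cc_zero[of "b$3+1" 3] ii by simp
    ultimately show ?thesis by (simp add: vec_eq_iff forall_2 dirac_comp)
  next
    case iii
    define j where "j = b $ 3 - t 3"
    have bj: "b $ 3 = t 3 + j" using iii j_def by simp
    have be: "(b + e 3) - e 3 = b" by (simp add: vec_eq_iff)
    have P3: "P q (b + e 3) = stepv (G q j) b"
      using bj c1 be unfolding P_def by simp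
    have P1: "P q (b + e 1) = G q j (b + e 1)" "P q (b + e 2) = G q j (b + e 2)"
      using bj c1 unfolding P_def by simp_all
    have cz: "cc k 3 (b $ 3 + 1) \<noteq> 0" using cc_zero[of "b$3+1" 3] bj by simp
    show ?thesis unfolding zero_fun_def vec_eq_iff forall_2 dirac_comp P3 P1 using cz
      by (simp add: stepv_def field_simps)
  qed
qed

lemma P_VV:
  assumes q: "q \<in> suppset (S0 n)"
  shows "P q \<in> VV n"
  unfolding VV_def hom_def
proof (intro CollectI conjI allI impI)
  fix a assume nz: "P q a \<noteq> 0"
  show "(\<Sum>j\<in>UNIV. a $ j) = n" using P_supp[OF q nz] by (simp add: sum_3)
next
  show "dirac k (P q) = 0" using P_dirac[OF q] .
next
  fix a i assume nz: "P q a \<noteq> 0"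
  then show "t i \<le> a $ i" using P_supp[OF q nz] exhaust_3[of i] by auto
qed

definition R :: "cpoly \<Rightarrow> cpoly" where
  "R p = (\<lambda>a. if a $ 3 = t 3 then p a else 0)"

lemma R_P:
  assumes q: "q \<in> suppset (S0 n)"
  shows "R (P q) = q"
proof
  fix a
  show "R (P q) a = q a"
  proof (cases "a $ 3 = t 3")
    case True then show ?thesis by (simp add: R_def P_def)
  next
    case False
    then have "q a = 0" using q by (auto simp: suppset_def S0_def)
    then show ?thesis using False by (simp add: R_def)
  qed
qed

lemma R_hom: "module_hom cscale cscale R"
  unfolding module_hom_iff
  using cscale_vs by (auto simp: module_iff_vector_space R_def fun_eq_iff)

lemma R_image: "R ` VV n = suppset (S0 n)"
proof
  show "R ` VV n \<subseteq> suppset (S0 n)"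
  proof clarify
    fix p assume p: "p \<in> VV n"
    show "R p \<in> suppset (S0 n)" unfolding suppset_def
    proof (intro CollectI allI impI)
      fix a assume nz: "R p a \<noteq> 0"
      then have a3: "a $ 3 = t 3" and pa: "p a \<noteq> 0" by (auto simp: R_def split: if_splits)
      have "(\<Sum>j\<in>UNIV. a $ j) = n" using p pa by (simp add: VV_def hom_def)
      then show "a \<in> S0 n" using a3 VV_supp[OF p pa] by (simp add: S0_def sum_3)
    qed
  qed
next
  show "suppset (S0 n) \<subseteq> R ` VV n"
    using R_P P_VV by (metis image_eqI subsetI)
qed

lemma R_inj: "inj_on R (VV n)"
proof (rule inj_onI)
  fix p p' assume p: "p \<in> VV n" and p': "p' \<in> VV n" and eq: "R p = R p'"
  have d: "p - p' \<in> VV n" using VV_sub p p' by (rule cs.subspace_diff)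
  have "p - p' = 0"
  proof (rule VV_zero[OF d])
    fix a :: expo assume "a $ 3 = t 3"
    then show "(p - p') a = 0" using fun_cong[OF eq, of a] by (simp add: R_def)
  qed
  then show "p = p'" by simp
qed

lemma dim_VV: "cs.dim (VV n) = 2 * card (S0 n)"
proof -
  have fin: "finite (S0 n)"
  proof (rule finite_subset)
    show "S0 n \<subseteq> (\<lambda>(x,y,z). vector [x,y,z]) ` ({..n} \<times> {..n} \<times> {..n})"
    proof
      fix a assume "a \<in> S0 n"
      then have "a $ 1 \<le> n" "a $ 2 \<le> n" "a $ 3 \<le> n" by (auto simp: S0_def)
      moreover have "a = vector [a$1, a$2, a$3]" by (simp add: vec_eq_iff forall_3)
      ultimately show "a \<in> (\<lambda>(x,y,z). vector [x,y,z]) ` ({..n} \<times> {..n} \<times> {..n})"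
        by (intro image_eqI[of _ _ "(a$1, a$2, a$3)"]) auto
    qed
  qed simp
  have "cs.dim (VV n) = cs.dim (suppset (S0 n))"
    using dim_iso[OF VV_sub R_hom R_inj R_image] .
  then show ?thesis using dim_suppset[OF fin] by simp
qed

end


context tset begin

lemma card_S0: "card (S0 n) = (if t 1 + t 2 + t 3 \<le> n then n - (t 1 + t 2 + t 3) + 1 else 0)"
proof (cases "t 1 + t 2 + t 3 \<le> n")
  case False
  then have "S0 n = {}" by (auto simp: S0_def)
  then show ?thesis using False by simp
next
  case True
  have inj: "inj_on (\<lambda>a. a $ 1) (S0 n)"
  proof (rule inj_onI)
    fix a b assume "a \<in> S0 n" "b \<in> S0 n" "a $ 1 = b $ 1"
    then show "a = b" by (auto simp: S0_def vec_eq_iff forall_3)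
  qed
  have img: "(\<lambda>a. a $ 1) ` S0 n = {t 1 .. n - t 2 - t 3}"
  proof
    show "(\<lambda>a. a $ 1) ` S0 n \<subseteq> {t 1 .. n - t 2 - t 3}" by (auto simp: S0_def)
  next
    show "{t 1 .. n - t 2 - t 3} \<subseteq> (\<lambda>a. a $ 1) ` S0 n"
    proof
      fix x assume x: "x \<in> {t 1 .. n - t 2 - t 3}"
      have "vector [x, n - t 3 - x, t 3] \<in> S0 n" using x True by (auto simp: S0_def)
      then show "x \<in> (\<lambda>a. a $ 1) ` S0 n" by (intro image_eqI[of _ _ "vector [x, n - t 3 - x, t 3]"]) auto
    qed
  qed
  have "card (S0 n) = card {t 1 .. n - t 2 - t 3}" using card_image[OF inj] img by simp
  then show ?thesis using True by simp
qed

end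

lemma tpar_fin:
  assumes "tpar k i \<noteq> \<infinity>"
  shows "odd (nat \<lfloor>- 2 * k $ i\<rfloor>) \<and> k $ i = - real (nat \<lfloor>- 2 * k $ i\<rfloor>) / 2"
proof -
  obtain m :: nat where m: "odd m" "2 * k $ i = - real m"
    using assms by (auto simp: tpar_def split: if_splits)
  then have "nat \<lfloor>- 2 * k $ i\<rfloor> = m" by simp
  then show ?thesis using m by simp
qed

theorem proposition3p5:
  fixes k :: "real ^ 3" and n :: nat
  defines "T \<equiv> tpar k 1 + tpar k 2 + tpar k 3"
  shows "(enat n < T \<longrightarrow> cdim (Mx k n 1 \<inter> Mx k n 2 \<inter> Mx k n 3) = 0)
       \<and> (T \<le> enat n \<longrightarrow> cdim (Mx k n 1 \<inter> Mx k n 2 \<inter> Mx k n 3) = 2 * (n - the_enat T + 1))"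
proof (cases "\<exists>i. tpar k i = \<infinity>")
  case True
  then obtain i where i: "tpar k i = \<infinity>" by blast
  have Tinf: "T = \<infinity>" using i exhaust_3[of i] by (auto simp: T_def)
  let ?V = "Mx k n 1 \<inter> Mx k n 2 \<inter> Mx k n 3"
  have "?V \<subseteq> Mx k n i" using exhaust_3[of i] by auto
  also have "Mx k n i \<subseteq> {0}" using i by (auto simp: Mx_def fun_eq_iff)
  finally have "?V \<subseteq> cs.span {}" by simp
  then have "cs.dim ?V = 0" using cs.dim_unique[of "{}" ?V 0] cs.independent_empty by simp
  then show ?thesis using Tinf by (simp add: cdim_def)
next
  case False
  define t where "t i = nat \<lfloor>- 2 * k $ i\<rfloor>" for i
  interpret tset k t
    using tpar_fin False unfolding t_def by unfold_locales blast+
  have T: "T = enat (t 1 + t 2 + t 3)" by (simp add: T_def tpar_eq)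
  have "cdim (Mx k n 1 \<inter> Mx k n 2 \<inter> Mx k n 3) = 2 * card (S0 n)"
    by (simp add: cdim_def Mx_eq dim_VV)
  then show ?thesis using T card_S0[of n] by auto
qed


end
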